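(* Let $G$ be a maximal $K_4$-minor free graph of order $n\geq 3$. Then $\gamma_{\times 2}(G)\leq \lfloor \frac{2n}{3}\rfloor$. *)

theory Defs
  imports Main
begin

definition simple_graph :: "'a set \<Rightarrow> ('a \<Rightarrow> 'a \<Rightarrow> bool) \<Rightarrow> bool" where
  "simple_graph V E \<longleftrightarrow> finite V \<and> (\<forall>x y. E x y \<longrightarrow> E y x)
     \<and> (\<forall>x. \<not> E x x) \<and> (\<forall>x y. E x y \<longrightarrow> x \<in> V \<and> y \<in> V)"

definition connected_set :: "('a \<Rightarrow> 'a \<Rightarrow> bool) \<Rightarrow> 'a set \<Rightarrow> bool" where
  "connected_set E B \<longleftrightarrow>
     (\<forall>x\<in>B. \<forall>y\<in>B. (\<lambda>u v. E u v \<and> u \<in> B \<and> v \<in> B)\<^sup>*\<^sup>* x y)"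

definition has_K4_minor :: "'a set \<Rightarrow> ('a \<Rightarrow> 'a \<Rightarrow> bool) \<Rightarrow> bool" where
  "has_K4_minor V E \<longleftrightarrow> (\<exists>B :: nat \<Rightarrow> 'a set.
     (\<forall>i<4. B i \<noteq> {} \<and> B i \<subseteq> V \<and> connected_set E (B i)) \<and>
     (\<forall>i<4. \<forall>j<4. i \<noteq> j \<longrightarrow> B i \<inter> B j = {} \<and> (\<exists>x\<in>B i. \<exists>y\<in>B j. E x y)))"

definition add_edge :: "('a \<Rightarrow> 'a \<Rightarrow> bool) \<Rightarrow> 'a \<Rightarrow> 'a \<Rightarrow> ('a \<Rightarrow> 'a \<Rightarrow> bool)" where
  "add_edge E x y = (\<lambda>u v. E u v \<or> (u = x \<and> v = y) \<or> (u = y \<and> v = x))"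

definition maximal_K4_minor_free :: "'a set \<Rightarrow> ('a \<Rightarrow> 'a \<Rightarrow> bool) \<Rightarrow> bool" where
  "maximal_K4_minor_free V E \<longleftrightarrow> \<not> has_K4_minor V E \<and>
     (\<forall>x\<in>V. \<forall>y\<in>V. x \<noteq> y \<and> \<not> E x y \<longrightarrow> has_K4_minor V (add_edge E x y))"

definition closed_nbhd :: "('a \<Rightarrow> 'a \<Rightarrow> bool) \<Rightarrow> 'a \<Rightarrow> 'a set" where
  "closed_nbhd E v = insert v {u. E v u}"

definition double_dominating :: "'a set \<Rightarrow> ('a \<Rightarrow> 'a \<Rightarrow> bool) \<Rightarrow> 'a set \<Rightarrow> bool" where
  "double_dominating V E S \<longleftrightarrow> S \<subseteq> V \<and> (\<forall>v\<in>V. card (S \<inter> closed_nbhd E v) \<ge> 2)"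

definition double_domination_number :: "'a set \<Rightarrow> ('a \<Rightarrow> 'a \<Rightarrow> bool) \<Rightarrow> nat" where
  "double_domination_number V E = Min {card S | S. double_dominating V E S}"

end

theory Submission
  imports Defs
begin



lemma rtranclp_lift:
  assumes "R\<^sup>*\<^sup>* a b" "\<And>u w. R u w \<Longrightarrow> S\<^sup>*\<^sup>* u w"
  shows "S\<^sup>*\<^sup>* a b"
  using assms(1) by induction (simp, metis rtranclp_trans assms(2))

lemma K4_mono:
  assumes "has_K4_minor V E" "V \<subseteq> V'" "\<And>u w. E u w \<Longrightarrow> E' u w"
  shows "has_K4_minor V' E'"
proof -
  from assms(1) obtain B :: "nat \<Rightarrow> _" where
    B1: "\<forall>i<4. B i \<noteq> {} \<and> B i \<subseteq> V \<and> connected_set E (B i)" and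
    B2: "\<forall>i<4. \<forall>j<4. i \<noteq> j \<longrightarrow> B i \<inter> B j = {} \<and> (\<exists>x\<in>B i. \<exists>y\<in>B j. E x y)"
    unfolding has_K4_minor_def by blast
  have "connected_set E' (B i)" if "i < 4" for i
    unfolding connected_set_def
  proof (intro ballI)
    fix x y assume "x \<in> B i" "y \<in> B i"
    then have "(\<lambda>u v. E u v \<and> u \<in> B i \<and> v \<in> B i)\<^sup>*\<^sup>* x y"
      using B1 that unfolding connected_set_def by blast
    then show "(\<lambda>u v. E' u v \<and> u \<in> B i \<and> v \<in> B i)\<^sup>*\<^sup>* x y"
      by (rule rtranclp_lift) (auto simp: assms(3))
  qed
  then have "\<forall>i<4. B i \<noteq> {} \<and> B i \<subseteq> V' \<and> connected_set E' (B i)"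
    using B1 assms(2) by blast
  moreover have "\<forall>i<4. \<forall>j<4. i \<noteq> j \<longrightarrow> B i \<inter> B j = {} \<and> (\<exists>x\<in>B i. \<exists>y\<in>B j. E' x y)"
    using B2 assms(3) by meson
  ultimately show ?thesis unfolding has_K4_minor_def by blast
qed

definition nb :: "('a \<Rightarrow> 'a \<Rightarrow> bool) \<Rightarrow> 'a \<Rightarrow> 'a set" where
  "nb E v = {u. E v u}"

definition delv :: "('a \<Rightarrow> 'a \<Rightarrow> bool) \<Rightarrow> 'a \<Rightarrow> ('a \<Rightarrow> 'a \<Rightarrow> bool)" where
  "delv E v = (\<lambda>p q. E p q \<and> p \<noteq> v \<and> q \<noteq> v)"

definition contr :: "('a \<Rightarrow> 'a \<Rightarrow> bool) \<Rightarrow> 'a \<Rightarrow> 'a \<Rightarrow> ('a \<Rightarrow> 'a \<Rightarrow> bool)" where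
  "contr E x y = (\<lambda>u w. (E u w \<and> u \<noteq> y \<and> w \<noteq> y) \<or> (u = x \<and> E y w \<and> w \<noteq> x)
      \<or> (w = x \<and> E y u \<and> u \<noteq> x))"

lemma K4_contr:
  assumes sg: "simple_graph V E" and xy: "E x y"
    and K: "has_K4_minor (V - {y}) (contr E x y)"
  shows "has_K4_minor V E"
proof -
  have sym: "E u w \<Longrightarrow> E w u" for u w using sg unfolding simple_graph_def by blast
  have irr: "\<not> E u u" for u using sg unfolding simple_graph_def by blast
  from K obtain B :: "nat \<Rightarrow> _" where
    B1: "\<forall>i<4. B i \<noteq> {} \<and> B i \<subseteq> V - {y} \<and> connected_set (contr E x y) (B i)" and
    B2: "\<forall>i<4. \<forall>j<4. i \<noteq> j \<longrightarrow> B i \<inter> B j = {} \<and> (\<exists>p\<in>B i. \<exists>q\<in>B j. contr E x y p q)"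
    unfolding has_K4_minor_def by blast
  define B' where "B' i = (if x \<in> B i then insert y (B i) else B i)" for i
  have ysub: "y \<in> V" using sg xy unfolding simple_graph_def by blast
  have conn: "connected_set E (B' i)" if i: "i < 4" for i
  proof (cases "x \<in> B i")
    case False
    show ?thesis unfolding connected_set_def
    proof (intro ballI)
      fix p q assume "p \<in> B' i" "q \<in> B' i"
      then have "p \<in> B i" "q \<in> B i" using False by (auto simp: B'_def)
      then have "(\<lambda>u v. contr E x y u v \<and> u \<in> B i \<and> v \<in> B i)\<^sup>*\<^sup>* p q"
        using B1 i unfolding connected_set_def by blast
      then show "(\<lambda>u v. E u v \<and> u \<in> B' i \<and> v \<in> B' i)\<^sup>*\<^sup>* p q"
        by (rule rtranclp_lift) (use False in \<open>auto simp: B'_def contr_def\<close>)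
    qed
  next
    case True
    let ?R = "\<lambda>u v. E u v \<and> u \<in> B' i \<and> v \<in> B' i"
    have Bi: "B' i = insert y (B i)" using True by (simp add: B'_def)
    have r1: "?R x y" "?R y x" using xy sym True Bi by simp_all
    have step: "?R\<^sup>*\<^sup>* u w" if "contr E x y u w" "u \<in> B i" "w \<in> B i" for u w
    proof -
      from that(1) consider "E u w" | "u = x" "E y w" | "w = x" "E y u" unfolding contr_def by blast
      then show ?thesis
      proof cases
        case 1 then have "?R u w" using that Bi by simp
        then show ?thesis by (rule r_into_rtranclp)
      next
        case 2
        have "?R y w" using 2 that Bi by simp
        then have yw: "?R\<^sup>*\<^sup>* y w" by (rule r_into_rtranclp)
        have "?R\<^sup>*\<^sup>* x w" by (rule converse_rtranclp_into_rtranclp[where r="?R", OF r1(1) yw])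
        then show ?thesis using 2(1) by simp
      next
        case 3
        have "?R u y" using 3 that Bi sym by simp
        then have uy: "?R\<^sup>*\<^sup>* u y" by (rule r_into_rtranclp)
        have "?R\<^sup>*\<^sup>* u x" by (rule rtranclp.rtrancl_into_rtrancl[where r="?R", OF uy r1(2)])
        then show ?thesis using 3(1) by simp
      qed
    qed
    have inB: "?R\<^sup>*\<^sup>* p q" if "p \<in> B i" "q \<in> B i" for p q
    proof -
      have "(\<lambda>u v. contr E x y u v \<and> u \<in> B i \<and> v \<in> B i)\<^sup>*\<^sup>* p q"
        using B1 i that unfolding connected_set_def by blast
      then show ?thesis
      proof (rule rtranclp_lift)
        fix u w assume "contr E x y u w \<and> u \<in> B i \<and> w \<in> B i"
        then show "?R\<^sup>*\<^sup>* u w" using step by blast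
      qed
    qed
    show ?thesis unfolding connected_set_def
    proof (intro ballI)
      fix p q assume p: "p \<in> B' i" and q: "q \<in> B' i"
      have p': "?R\<^sup>*\<^sup>* p x"
      proof (cases "p = y")
        case True then show ?thesis using r1(2) by (simp add: r_into_rtranclp)
      next
        case False then have "p \<in> B i" using p Bi by simp
        then show ?thesis using inB \<open>x \<in> B i\<close> by blast
      qed
      have q': "?R\<^sup>*\<^sup>* x q"
      proof (cases "q = y")
        case True then show ?thesis using r1(1) by (simp add: r_into_rtranclp)
      next
        case False then have "q \<in> B i" using q Bi by simp
        then show ?thesis using inB \<open>x \<in> B i\<close> by blast
      qed
      show "?R\<^sup>*\<^sup>* p q" using p' q' by (rule rtranclp_trans)
    qed
  qed
  have "\<forall>i<4. B' i \<noteq> {} \<and> B' i \<subseteq> V \<and> connected_set E (B' i)"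
    using B1 conn ysub by (auto simp: B'_def)
  moreover have "\<forall>i<4. \<forall>j<4. i \<noteq> j \<longrightarrow> B' i \<inter> B' j = {} \<and> (\<exists>p\<in>B' i. \<exists>q\<in>B' j. E p q)"
  proof (intro allI impI conjI)
    fix i j :: nat assume ij: "i < 4" "j < 4" "i \<noteq> j"
    have d: "B i \<inter> B j = {}" using B2 ij by blast
    have yi: "y \<notin> B i" "y \<notin> B j" using B1 ij by auto
    show "B' i \<inter> B' j = {}" using d yi by (auto simp: B'_def)
    obtain p q where pq: "p \<in> B i" "q \<in> B j" "contr E x y p q" using B2 ij by blast
    from pq(3) consider "E p q" | "p = x" "E y q" | "q = x" "E y p" unfolding contr_def by blast
    then show "\<exists>p\<in>B' i. \<exists>q\<in>B' j. E p q"
    proof cases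
      case 1 then show ?thesis using pq by (auto simp: B'_def)
    next
      case 2 then show ?thesis using pq by (auto simp: B'_def)
    next
      case 3 then show ?thesis using pq sym by (auto simp: B'_def)
    qed
  qed
  ultimately show ?thesis unfolding has_K4_minor_def by blast
qed




lemma reroute:
  assumes conn: "connected_set E B" and vB: "v \<in> B"
    and sym: "\<And>p q. E p q \<Longrightarrow> E q p" and irr: "\<And>p. \<not> E p p"
    and cl: "\<And>p q. E v p \<Longrightarrow> E v q \<Longrightarrow> p \<noteq> q \<Longrightarrow> E p q"
  shows "connected_set E (B - {v})"
  unfolding connected_set_def
proof (intro ballI)
  fix p s assume p: "p \<in> B - {v}" and s: "s \<in> B - {v}"
  let ?RB = "\<lambda>u w. E u w \<and> u \<in> B \<and> w \<in> B"
  let ?R = "\<lambda>u w. E u w \<and> u \<in> B - {v} \<and> w \<in> B - {v}"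
  have path: "?RB\<^sup>*\<^sup>* p s" using conn p s unfolding connected_set_def by blast
  have "\<forall>t. ?RB\<^sup>*\<^sup>* p t \<longrightarrow> (t \<noteq> v \<longrightarrow> ?R\<^sup>*\<^sup>* p t) \<and> (t = v \<longrightarrow> (\<exists>q. q \<in> B - {v} \<and> E q v \<and> ?R\<^sup>*\<^sup>* p q))"
  proof (intro allI impI)
    fix t assume "?RB\<^sup>*\<^sup>* p t"
    then show "(t \<noteq> v \<longrightarrow> ?R\<^sup>*\<^sup>* p t) \<and> (t = v \<longrightarrow> (\<exists>q. q \<in> B - {v} \<and> E q v \<and> ?R\<^sup>*\<^sup>* p q))"
    proof (induction rule: rtranclp_induct)
      case base
      then show ?case using p by auto
    next
      case (step t r)
      show ?case
      proof (cases "t = v")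
        case tv: True
        then obtain q where q: "q \<in> B - {v}" "E q v" "?R\<^sup>*\<^sup>* p q" using step.IH by blast
        have rv: "r \<noteq> v" using step.hyps(2) tv irr by blast
        have "?R\<^sup>*\<^sup>* p r"
        proof (cases "q = r")
          case True then show ?thesis using q by simp
        next
          case False
          have "E q r" using cl[OF sym[OF q(2)] _ False] step.hyps(2) tv by blast
          then have "?R q r" using q step.hyps(2) rv by blast
          then show ?thesis using q(3) by (rule rtranclp.rtrancl_into_rtrancl[rotated])
        qed
        then show ?thesis using rv by blast
      next
        case tnv: False
        then have pt: "?R\<^sup>*\<^sup>* p t" using step.IH by blast
        show ?thesis
        proof (cases "r = v")
          case True
          then show ?thesis using pt step.hyps(2) tnv by blast
        next
          case False
          then have "?R t r" using step.hyps(2) tnv by blast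
          then show ?thesis using pt False by (simp add: rtranclp.rtrancl_into_rtrancl)
        qed
      qed
    qed
  qed
  then show "?R\<^sup>*\<^sup>* p s" using path s by blast
qed

lemma nbr_in:
  assumes conn: "connected_set E B" and vB: "v \<in> B" and z: "z \<in> B" "z \<noteq> v"
    and irr: "\<And>p. \<not> E p p"
  shows "\<exists>w\<in>B. w \<noteq> v \<and> E w v"
proof -
  let ?RB = "\<lambda>u w. E u w \<and> u \<in> B \<and> w \<in> B"
  have "?RB\<^sup>*\<^sup>* z v" using conn z vB unfolding connected_set_def by blast
  then have "?RB\<^sup>+\<^sup>+ z v" using z(2) rtranclpD[of ?RB z v] by blast
  then obtain w where "?RB w v" by (cases rule: tranclp.cases) auto
  moreover have "w \<noteq> v" using calculation irr by metis
  ultimately show ?thesis by blast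
qed

lemma conn_mono:
  assumes "connected_set E S" "\<And>u w. u \<in> S \<Longrightarrow> w \<in> S \<Longrightarrow> E u w \<Longrightarrow> E' u w"
  shows "connected_set E' S"
  unfolding connected_set_def
proof (intro ballI)
  fix p q assume "p \<in> S" "q \<in> S"
  then have "(\<lambda>u w. E u w \<and> u \<in> S \<and> w \<in> S)\<^sup>*\<^sup>* p q" using assms(1) unfolding connected_set_def by blast
  then show "(\<lambda>u w. E' u w \<and> u \<in> S \<and> w \<in> S)\<^sup>*\<^sup>* p q"
  proof (rule rtranclp_lift)
    fix u w assume "E u w \<and> u \<in> S \<and> w \<in> S"
    then show "(\<lambda>u w. E' u w \<and> u \<in> S \<and> w \<in> S)\<^sup>*\<^sup>* u w" using assms(2) by (simp add: r_into_rtranclp)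
  qed
qed

lemma sg_props:
  assumes "simple_graph V E"
  shows "\<And>p q. E p q \<Longrightarrow> E q p" "\<And>p. \<not> E p p" "\<And>p q. E p q \<Longrightarrow> p \<in> V" "\<And>p q. E p q \<Longrightarrow> q \<in> V"
    "finite V" "\<And>v. finite (nb E v)"
proof -
  show "finite V" using assms unfolding simple_graph_def by blast
  moreover show "\<And>p q. E p q \<Longrightarrow> q \<in> V" using assms unfolding simple_graph_def by blast
  ultimately show "\<And>v. finite (nb E v)" unfolding nb_def by (metis (mono_tags) mem_Collect_eq rev_finite_subset subsetI)
qed (use assms in \<open>auto simp: simple_graph_def\<close>)

lemma K4_del:
  assumes sg: "simple_graph V E" and K: "has_K4_minor V E" and vV: "v \<in> V"
    and c2: "card (nb E v) \<le> 2"
    and cl: "\<And>p q. E v p \<Longrightarrow> E v q \<Longrightarrow> p \<noteq> q \<Longrightarrow> E p q"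
  shows "has_K4_minor (V - {v}) (delv E v)"
proof -
  note sp = sg_props[OF sg]
  from K obtain B :: "nat \<Rightarrow> _" where
    B1: "\<forall>i<4. B i \<noteq> {} \<and> B i \<subseteq> V \<and> connected_set E (B i)" and
    B2: "\<forall>i<4. \<forall>j<4. i \<noteq> j \<longrightarrow> B i \<inter> B j = {} \<and> (\<exists>x\<in>B i. \<exists>y\<in>B j. E x y)"
    unfolding has_K4_minor_def by blast
  define B' where "B' i = B i - {v}" for i
  have ne: "B' i \<noteq> {}" if i: "i < 4" for i
  proof (cases "v \<in> B i")
    case False then show ?thesis using B1 i by (auto simp: B'_def)
  next
    case True
    show ?thesis
    proof (rule ccontr)
      assume "\<not> B' i \<noteq> {}"
      then have Bi: "B i = {v}" using True by (auto simp: B'_def)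
      have "\<forall>j\<in>{..<4} - {i}. \<exists>y. y \<in> B j \<and> E v y"
        using B2 i Bi by (metis DiffE insertCI lessThan_iff singletonD)
      then obtain y where y: "\<And>j. j \<in> {..<4} - {i} \<Longrightarrow> y j \<in> B j \<and> E v (y j)" by metis
      have inj: "inj_on y ({..<4} - {i})"
      proof (rule inj_onI)
        fix j k assume jk: "j \<in> {..<4} - {i}" "k \<in> {..<4} - {i}" "y j = y k"
        show "j = k"
        proof (rule ccontr)
          assume "j \<noteq> k"
          then have "B j \<inter> B k = {}" using B2 jk by auto
          then show False using y[OF jk(1)] y[OF jk(2)] jk(3) by auto
        qed
      qed
      have "y ` ({..<4} - {i}) \<subseteq> nb E v" using y by (auto simp: nb_def)
      then have "card (y ` ({..<4} - {i})) \<le> card (nb E v)" using sp(6) by (rule card_mono[rotated])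
      moreover have "card (y ` ({..<4} - {i})) = 3" using card_image[OF inj] i by simp
      ultimately show False using c2 by simp
    qed
  qed
  have conn: "connected_set (delv E v) (B' i)" if i: "i < 4" for i
  proof -
    have "connected_set E (B' i)"
    proof (cases "v \<in> B i")
      case True show ?thesis unfolding B'_def
        by (rule reroute[where E=E, OF _ True]) (use B1 i in blast, fact sp(1), fact sp(2), fact cl)
    next
      case False then show ?thesis using B1 i by (simp add: B'_def)
    qed
    then show ?thesis by (rule conn_mono) (auto simp: delv_def B'_def)
  qed
  have "\<forall>i<4. B' i \<noteq> {} \<and> B' i \<subseteq> V - {v} \<and> connected_set (delv E v) (B' i)"
    using ne conn B1 by (auto simp: B'_def)
  moreover have "\<forall>i<4. \<forall>j<4. i \<noteq> j \<longrightarrow> B' i \<inter> B' j = {} \<and> (\<exists>p\<in>B' i. \<exists>q\<in>B' j. delv E v p q)"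
  proof (intro allI impI conjI)
    fix i j :: nat assume ij: "i < 4" "j < 4" "i \<noteq> j"
    have d: "B i \<inter> B j = {}" using B2 ij by blast
    then show "B' i \<inter> B' j = {}" by (auto simp: B'_def)
    have fix_end: "\<exists>p\<in>B' k. \<exists>q\<in>B' l. delv E v p q"
      if kl: "k < 4" "l < 4" "B k \<inter> B l = {}" "p \<in> B k" "q \<in> B l" "E p q" "q \<noteq> v" for k l p q
    proof (cases "p = v")
      case False then show ?thesis using kl by (auto simp: B'_def delv_def)
    next
      case True
      obtain z where z: "z \<in> B' k" using ne[OF kl(1)] by blast
      obtain w where w: "w \<in> B k" "w \<noteq> v" "E w v"
        using nbr_in[of E "B k" v z] B1 kl z True sp(2) by (auto simp: B'_def)
      have "w \<noteq> q" using w kl by blast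
      then have "E w q" using cl[of w q] sp(1)[OF w(3)] kl True by blast
      then show ?thesis using w kl by (auto simp: B'_def delv_def)
    qed
    obtain p q where pq: "p \<in> B i" "q \<in> B j" "E p q" using B2 ij by blast
    show "\<exists>p\<in>B' i. \<exists>q\<in>B' j. delv E v p q"
    proof (cases "q = v")
      case False then show ?thesis using fix_end[OF ij(1,2) d pq] by blast
    next
      case True
      then have pv: "p \<noteq> v" using pq d by blast
      have "\<exists>p\<in>B' j. \<exists>q\<in>B' i. delv E v p q"
        using fix_end[OF ij(2,1) _ pq(2,1) sp(1)[OF pq(3)] pv] d by blast
      then show ?thesis unfolding delv_def using sp(1) by blast
    qed
  qed
  ultimately show ?thesis unfolding has_K4_minor_def by blast
qed




lemma sg_delv: "simple_graph V E \<Longrightarrow> simple_graph (V - {v}) (delv E v)"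
  unfolding simple_graph_def delv_def by blast

lemma sg_contr: assumes "simple_graph V E" "E x y" shows "simple_graph (V - {y}) (contr E x y)"
  using assms unfolding simple_graph_def contr_def by blast

lemma sg_add: assumes "simple_graph V E" "x \<in> V" "y \<in> V" "x \<noteq> y" shows "simple_graph V (add_edge E x y)"
  using assms unfolding simple_graph_def add_edge_def by blast

lemma nb_contr_x: assumes "simple_graph V E" "E x y"
  shows "nb (contr E x y) x = (nb E x \<union> nb E y) - {x, y}"
  using assms unfolding simple_graph_def contr_def nb_def by blast

lemma nb_contr_z: assumes "simple_graph V E" "E x y" "z \<noteq> x" "z \<noteq> y"
  shows "nb (contr E x y) z = (nb E z - {y}) \<union> (if E y z then {x} else {})"
  using assms unfolding simple_graph_def contr_def nb_def by auto

lemma contr_deg: assumes sg: "simple_graph V E" and xy: "E x y" and z: "z \<noteq> x" "z \<noteq> y"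
  shows "card (nb E z) \<le> card (nb (contr E x y) z) + (if E z x \<and> E z y then 1 else 0)"
proof -
  note sp = sg_props[OF sg]
  have f: "finite (nb E z)" by (rule sp(6))
  have eq: "nb (contr E x y) z = (nb E z - {y}) \<union> (if E y z then {x} else {})"
    by (rule nb_contr_z[OF sg xy z])
  show ?thesis
  proof (cases "E z y")
    case False
    then have "nb (contr E x y) z = nb E z" using eq sp(1) by (auto simp: nb_def)
    then show ?thesis by simp
  next
    case True
    have yin: "y \<in> nb E z" using True by (simp add: nb_def)
    have c1: "card (nb E z - {y}) = card (nb E z) - 1" using yin f by simp
    show ?thesis
    proof (cases "E z x")
      case True
      have "card (nb E z - {y}) \<le> card (nb (contr E x y) z)" using eq sp(6) 
        by (intro card_mono) (auto simp: nb_contr_z[OF sg xy z] sp(6))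
      moreover have "card (nb E z) > 0" using yin f card_gt_0_iff by blast
      ultimately show ?thesis using c1 True \<open>E z y\<close> by simp
    next
      case False
      then have xn: "x \<notin> nb E z - {y}" by (simp add: nb_def)
      have "nb (contr E x y) z = insert x (nb E z - {y})" using eq sp(1)[OF True] by auto
      then have "card (nb (contr E x y) z) = card (nb E z - {y}) + 1" using xn f by simp
      moreover have "card (nb E z) > 0" using yin f card_gt_0_iff by blast
      ultimately show ?thesis using c1 by simp
    qed
  qed
qed

lemma K4_card: assumes "has_K4_minor V E" "finite V" shows "4 \<le> card V"
proof -
  from assms(1) obtain B :: "nat \<Rightarrow> _" where
    B1: "\<forall>i<4. B i \<noteq> {} \<and> B i \<subseteq> V \<and> connected_set E (B i)" and
    B2: "\<forall>i<4. \<forall>j<4. i \<noteq> j \<longrightarrow> B i \<inter> B j = {} \<and> (\<exists>x\<in>B i. \<exists>y\<in>B j. E x y)"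
    unfolding has_K4_minor_def by blast
  have "\<forall>i. \<exists>x. i < 4 \<longrightarrow> x \<in> B i" using B1 by blast
  from choice[OF this] obtain f where f0: "\<forall>i. i < 4 \<longrightarrow> f i \<in> B i" by blast
  then have f: "\<And>i. i < 4 \<Longrightarrow> f i \<in> B i" by blast
  have "inj_on f {..<4}"
  proof (rule inj_onI)
    fix i j assume "i \<in> {..<4::nat}" "j \<in> {..<4::nat}" "f i = f j"
    then show "i = j" using f B2 by (metis disjoint_iff lessThan_iff)
  qed
  moreover have "f ` {..<4} \<subseteq> V" using f B1 by auto
  ultimately have "card (f ` {..<4}) \<le> card V" "card (f ` {..<4}) = 4"
    using assms(2) card_mono card_image[of f "{..<4::nat}"] by (blast, simp)
  then show ?thesis by simp
qed




definition IHD :: "'a set \<Rightarrow> bool" where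
  "IHD V \<longleftrightarrow> (\<forall>V' (E' :: 'a \<Rightarrow> 'a \<Rightarrow> bool). card V' < card V \<longrightarrow> simple_graph V' E' \<longrightarrow> V' \<noteq> {}
      \<longrightarrow> (\<forall>v\<in>V'. 3 \<le> card (nb E' v)) \<longrightarrow> has_K4_minor V' E')"

lemma contr_ok:
  assumes IH: "IHD V" and sg: "simple_graph V E" and deg: "\<forall>v\<in>V. 3 \<le> card (nb E v)"
    and xy: "E x y" and com: "\<And>z. E x z \<Longrightarrow> E y z \<Longrightarrow> 4 \<le> card (nb E z)"
    and big: "3 \<le> card ((nb E x \<union> nb E y) - {x, y})"
  shows "has_K4_minor V E"
proof -
  note sp = sg_props[OF sg]
  have xV: "x \<in> V" and yV: "y \<in> V" using sp xy by blast+
  have sg': "simple_graph (V - {y}) (contr E x y)" by (rule sg_contr[OF sg xy])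
  have "x \<noteq> y" using sp(2) xy by blast
  have "card (V - {y}) < card V" using yV sp(5) by (meson card_Diff1_less)
  moreover have "V - {y} \<noteq> {}" using xV \<open>x \<noteq> y\<close> by blast
  moreover have "\<forall>v\<in>V - {y}. 3 \<le> card (nb (contr E x y) v)"
  proof
    fix z assume z: "z \<in> V - {y}"
    show "3 \<le> card (nb (contr E x y) z)"
    proof (cases "z = x")
      case True then show ?thesis using nb_contr_x[OF sg xy] big by simp
    next
      case False
      have "card (nb E z) \<le> card (nb (contr E x y) z) + (if E z x \<and> E z y then 1 else 0)"
        using contr_deg[OF sg xy False] z by blast
      moreover have "3 \<le> card (nb E z)" using deg z by blast
      moreover have "E z x \<Longrightarrow> E z y \<Longrightarrow> 4 \<le> card (nb E z)" using com sp(1) by blast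
      ultimately show ?thesis by (auto split: if_splits)
    qed
  qed
  ultimately have "has_K4_minor (V - {y}) (contr E x y)" using IH sg' unfolding IHD_def by blast
  then show ?thesis by (rule K4_contr[OF sg xy])
qed

lemma nc_card:
  assumes sg: "simple_graph V E" and deg: "\<forall>v\<in>V. 3 \<le> card (nb E v)"
    and xy: "E x y" and nc: "nb E x \<inter> nb E y = {}"
  shows "3 \<le> card ((nb E x \<union> nb E y) - {x, y})"
proof -
  note sp = sg_props[OF sg]
  have xV: "x \<in> V" and yV: "y \<in> V" using sp xy by blast+
  have eq: "(nb E x \<union> nb E y) - {x, y} = (nb E x - {y}) \<union> (nb E y - {x})"
    using sp(2) by (auto simp: nb_def)
  have d: "(nb E x - {y}) \<inter> (nb E y - {x}) = {}" using nc by blast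
  have "y \<in> nb E x" "x \<in> nb E y" using xy sp(1)[OF xy] by (auto simp: nb_def)
  then have "card (nb E x - {y}) = card (nb E x) - 1" "card (nb E y - {x}) = card (nb E y) - 1"
    using sp(6) by auto
  then have c1: "card (nb E x - {y}) \<ge> 2" and c2: "card (nb E y - {x}) \<ge> 2"
    using deg xV yV by fastforce+
  have "card ((nb E x - {y}) \<union> (nb E y - {x})) = card (nb E x - {y}) + card (nb E y - {x})"
    using d sp(6) by (simp add: card_Un_disjoint)
  then show ?thesis using eq c1 c2 by simp
qed

lemma nc_ok:
  assumes IH: "IHD V" and sg: "simple_graph V E" and deg: "\<forall>v\<in>V. 3 \<le> card (nb E v)"
    and xy: "E x y" and nc: "nb E x \<inter> nb E y = {}"
  shows "has_K4_minor V E"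
proof (rule contr_ok[OF IH sg deg xy])
  show "\<And>z. E x z \<Longrightarrow> E y z \<Longrightarrow> 4 \<le> card (nb E z)" using nc by (auto simp: nb_def)
  show "3 \<le> card ((nb E x \<union> nb E y) - {x, y})" by (rule nc_card[OF sg deg xy nc])
qed




lemma card_ins_diff2:
  assumes "finite A" "p \<in> A" "q \<in> A" "p \<noteq> q" "r \<notin> A"
  shows "card (insert r (A - {p, q})) = card A - 1"
proof -
  have "card (A - {p, q}) = card A - 2" using assms by (simp add: card_Diff_subset)
  moreover have "card A \<ge> 2" using assms by (metis card_2_iff insert_subset card_mono empty_subsetI order_refl)
  ultimately show ?thesis using assms by simp
qed

lemma op3_ok:
  assumes IH: "IHD V" and sg: "simple_graph V E" and deg: "\<forall>v\<in>V. 3 \<le> card (nb E v)"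
    and nx: "nb E x = {a, b, c}" and na: "nb E a = {x, b, c}" and bc: "\<not> E b c"
    and db: "4 \<le> card (nb E b)" and dc: "4 \<le> card (nb E c)"
    and dist: "x \<noteq> a" "x \<noteq> b" "x \<noteq> c" "a \<noteq> b" "a \<noteq> c" "b \<noteq> c"
  shows "has_K4_minor V E"
proof -
  note sp = sg_props[OF sg]
  have Exa: "E x a" "E x b" "E x c" using nx by (auto simp: nb_def)
  have Eab: "E a b" "E a c" using na by (auto simp: nb_def)
  have bx: "E b x" using sp(1) Exa by blast
  define C where "C = contr E b x"
  define D where "D = delv C a"
  define W where "W = V - {x} - {a}"
  have sgC: "simple_graph (V - {x}) C" unfolding C_def by (rule sg_contr[OF sg bx])
  have sgD: "simple_graph W D" unfolding D_def W_def by (rule sg_delv[OF sgC])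
  note spD = sg_props[OF sgD]
  have cb: "\<not> E c b" using bc sp(1) by blast
  have xV: "x \<in> V" using sp Exa by blast
  have bW: "b \<in> W" using sp Exa dist unfolding W_def by blast
  have cardW: "card W < card V"
  proof -
    have "card (V - {x} - {a}) \<le> card (V - {x})" by (rule card_mono) (use sp(5) in auto)
    moreover have "card (V - {x}) < card V" using xV sp(5) by (rule card_Diff1_less[rotated])
    ultimately show ?thesis unfolding W_def by simp
  qed
  have nbD: "nb D z = nb C z - {a}" if "z \<noteq> a" for z using that by (auto simp: D_def delv_def nb_def)
  have degD: "3 \<le> card (nb D z)" if z: "z \<in> W" for z
  proof -
    have za: "z \<noteq> a" "z \<noteq> x" using z by (auto simp: W_def)
    consider "z = b" | "z = c" | "z \<noteq> b" "z \<noteq> c" by blast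
    then show ?thesis
    proof cases
      case 1
      have "nb C b = (nb E b \<union> nb E x) - {b, x}" unfolding C_def by (rule nb_contr_x[OF sg bx])
      moreover have "b \<notin> nb E b" using sp(2) by (simp add: nb_def)
      ultimately have "insert c (nb E b - {x, a}) \<subseteq> nb D z" using 1 nbD za dist nx by auto
      moreover have "card (insert c (nb E b - {x, a})) = card (nb E b) - 1"
        using card_ins_diff2[of "nb E b" x a c] sp(6) bx sp(1) Eab bc dist by (auto simp: nb_def)
      ultimately show ?thesis using db card_mono[OF spD(6), of "insert c (nb E b - {x, a})" z] by linarith
    next
      case 2
      have "nb C c = (nb E c - {x}) \<union> (if E x c then {b} else {})" unfolding C_def
        using nb_contr_z[OF sg bx] 2 dist by metis
      then have "insert b (nb E c - {x, a}) \<subseteq> nb D z" using 2 nbD za dist Exa by auto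
      moreover have "card (insert b (nb E c - {x, a})) = card (nb E c) - 1"
        using card_ins_diff2[of "nb E c" x a b] sp(6) sp(1)[OF Exa(3)] sp(1)[OF Eab(2)] cb dist
        by (auto simp: nb_def)
      ultimately show ?thesis using dc card_mono[OF spD(6), of "insert b (nb E c - {x, a})" z] by linarith
    next
      case 3
      have nzx: "\<not> E x z" using nx 3 za by (auto simp: nb_def)
      have nza: "\<not> E a z" using na 3 za by (auto simp: nb_def)
      have "nb C z = (nb E z - {x}) \<union> (if E x z then {b} else {})" unfolding C_def
        using nb_contr_z[OF sg bx] 3 za by metis
      then have "nb D z = nb E z" using nbD za nzx nza sp(1) by (auto simp: nb_def)
      moreover have "z \<in> V" using z by (simp add: W_def)
      ultimately show ?thesis using deg by simp
    qed
  qed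
  have "has_K4_minor W D" using IH cardW sgD bW degD unfolding IHD_def by blast
  then have "has_K4_minor (V - {x}) C" by (rule K4_mono) (auto simp: W_def D_def delv_def)
  then show ?thesis unfolding C_def by (rule K4_contr[OF sg bx])
qed




lemma conn_single: "connected_set E {x}"
  unfolding connected_set_def by auto

lemma K4_clique:
  assumes V: "x \<in> V" "a \<in> V" "b \<in> V" "c \<in> V"
    and dist: "x \<noteq> a" "x \<noteq> b" "x \<noteq> c" "a \<noteq> b" "a \<noteq> c" "b \<noteq> c"
    and sym: "\<And>p q. E p q \<Longrightarrow> E q p"
    and e: "E x a" "E x b" "E x c" "E a b" "E a c" "E b c"
  shows "has_K4_minor V E"
proof -
  define B :: "nat \<Rightarrow> _" where "B i = [{x}, {a}, {b}, {c}] ! i" for i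
  have i4: "i < 4 \<Longrightarrow> i = 0 \<or> i = 1 \<or> i = 2 \<or> i = 3" for i :: nat by arith
  have "\<forall>i<4. B i \<noteq> {} \<and> B i \<subseteq> V \<and> connected_set E (B i)"
  proof (intro allI impI)
    fix i :: nat assume "i < 4"
    then show "B i \<noteq> {} \<and> B i \<subseteq> V \<and> connected_set E (B i)"
      using i4[OF \<open>i < 4\<close>] V by (elim disjE) (auto simp: B_def conn_single)
  qed
  moreover have "\<forall>i<4. \<forall>j<4. i \<noteq> j \<longrightarrow> B i \<inter> B j = {} \<and> (\<exists>p\<in>B i. \<exists>q\<in>B j. E p q)"
  proof (intro allI impI)
    fix i j :: nat assume "i < 4" "j < 4" "i \<noteq> j"
    then show "B i \<inter> B j = {} \<and> (\<exists>p\<in>B i. \<exists>q\<in>B j. E p q)"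
      using i4[OF \<open>i < 4\<close>] i4[OF \<open>j < 4\<close>] dist e sym by (elim disjE) (auto simp: B_def)
  qed
  ultimately show ?thesis unfolding has_K4_minor_def by blast
qed

lemma H2:
  assumes IH: "IHD V" and sg: "simple_graph V E" and deg: "\<forall>v\<in>V. 3 \<le> card (nb E v)"
    and nx: "nb E x = {a, b, c}" and na: "nb E a = {x, b, c}" and bc: "\<not> E b c"
    and db: "card (nb E b) = 3"
    and dist: "x \<noteq> a" "x \<noteq> b" "x \<noteq> c" "a \<noteq> b" "a \<noteq> c" "b \<noteq> c"
  shows "has_K4_minor V E"
proof -
  note sp = sg_props[OF sg]
  have "E x b" "E a b" using nx na by (auto simp: nb_def)
  then have xa: "x \<in> nb E b" "a \<in> nb E b" using sp(1) by (auto simp: nb_def)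
  have "card (nb E b - {x, a}) = 1" using xa db sp(6) dist by (simp add: card_Diff_subset)
  then obtain d where d: "nb E b - {x, a} = {d}" by (rule card_1_singletonE)
  then have bd: "E b d" and dxa: "d \<noteq> x" "d \<noteq> a" by (auto simp: nb_def)
  have nbb: "nb E b = {x, a, d}" using d xa by auto
  have "nb E b \<inter> nb E d = {}"
  proof (rule ccontr)
    assume "nb E b \<inter> nb E d \<noteq> {}"
    then obtain w where w: "w \<in> {x, a, d}" "E d w" using nbb by (auto simp: nb_def)
    show False
    proof -
      have "w = x \<or> w = a \<or> w = d" using w by auto
      moreover have "w = x \<Longrightarrow> False"
      proof -
        assume "w = x" then have "d \<in> nb E x" using w sp(1) by (auto simp: nb_def)
        then show False using nx dxa bc bd sp(2) by auto
      qed
      moreover have "w = a \<Longrightarrow> False"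
      proof -
        assume "w = a" then have "d \<in> nb E a" using w sp(1) by (auto simp: nb_def)
        then show False using na dxa bc bd sp(2) by auto
      qed
      moreover have "w = d \<Longrightarrow> False" using w sp(2) by auto
      ultimately show False by blast
    qed
  qed
  then show ?thesis by (rule nc_ok[OF IH sg deg bd])
qed

lemma H:
  assumes IH: "IHD V" and sg: "simple_graph V E" and deg: "\<forall>v\<in>V. 3 \<le> card (nb E v)"
    and nx: "nb E x = {a, b, c}" and ab: "E a b" and ac: "E a c" and bc: "\<not> E b c"
    and dist: "x \<noteq> a" "x \<noteq> b" "x \<noteq> c" "a \<noteq> b" "a \<noteq> c" "b \<noteq> c"
  shows "has_K4_minor V E"
proof (rule ccontr)
  assume nK: "\<not> has_K4_minor V E"
  note sp = sg_props[OF sg]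
  have Ex: "E x a" "E x b" "E x c" using nx by (auto simp: nb_def)
  have V: "x \<in> V" "a \<in> V" "b \<in> V" "c \<in> V" using Ex sp by blast+
  have xa: "x \<in> nb E b" "a \<in> nb E b" using Ex ab sp(1) by (auto simp: nb_def)
  have "card (nb E b - {x, a}) \<ge> 1" using xa deg V sp(6) dist by (auto simp: card_Diff_subset)
  then obtain d where d: "d \<in> nb E b" "d \<noteq> x" "d \<noteq> a"
    by (metis Diff_iff card_0_eq insertCI not_one_le_zero sp(6) finite_Diff ex_in_conv)
  have dc: "d \<noteq> c" "d \<noteq> b" using d bc sp(2) by (auto simp: nb_def)
  have da3: "card (nb E a) = 3"
  proof (rule ccontr)
    assume "card (nb E a) \<noteq> 3"
    then have a4: "4 \<le> card (nb E a)" using deg V by force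
    have "has_K4_minor V E"
    proof (rule contr_ok[OF IH sg deg Ex(2)])
      fix z assume "E x z" "E b z"
      then have "z = a" using nx bc sp(2) by (auto simp: nb_def)
      then show "4 \<le> card (nb E z)" using a4 by simp
    next
      have "{a, c, d} \<subseteq> (nb E x \<union> nb E b) - {x, b}" using nx d dc dist by auto
      then have "card {a, c, d} \<le> card ((nb E x \<union> nb E b) - {x, b})"
        by (rule card_mono[rotated]) (use sp(6) in auto)
      moreover have "card {a, c, d} = 3" using dist d dc by auto
      ultimately show "3 \<le> card ((nb E x \<union> nb E b) - {x, b})" by simp
    qed
    then show False using nK by blast
  qed
  have "{x, b, c} \<subseteq> nb E a" using Ex ab ac sp(1) by (auto simp: nb_def)
  moreover have "card {x, b, c} = 3" using dist by auto
  ultimately have na: "nb E a = {x, b, c}" using da3 sp(6) by (metis card_subset_eq)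
  show False
  proof (cases "4 \<le> card (nb E b) \<and> 4 \<le> card (nb E c)")
    case True
    then show False using op3_ok[OF IH sg deg nx na bc _ _ dist] nK by blast
  next
    case False
    then consider "card (nb E b) = 3" | "card (nb E c) = 3" using deg V by force
    then show False
    proof cases
      case 1 then show False using H2[OF IH sg deg nx na bc 1 dist] nK by blast
    next
      case 2
      have nx': "nb E x = {a, c, b}" using nx by auto
      have na': "nb E a = {x, c, b}" using na by auto
      have cb: "\<not> E c b" using bc sp(1) by blast
      show False using H2[OF IH sg deg nx' na' cb 2] dist nK by auto
    qed
  qed
qed




lemma D_step:
  assumes IH: "IHD V" and sg: "simple_graph V E" and ne: "V \<noteq> {}"
    and deg: "\<forall>v\<in>V. 3 \<le> card (nb E v)"
  shows "has_K4_minor V E"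
proof (rule ccontr)
  assume nK: "\<not> has_K4_minor V E"
  note sp = sg_props[OF sg]
  show False
  proof (cases "\<forall>v\<in>V. 4 \<le> card (nb E v)")
    case True
    obtain v where v: "v \<in> V" using ne by blast
    then have "nb E v \<noteq> {}" using deg by force
    then obtain y where vy: "E v y" by (auto simp: nb_def)
    have "has_K4_minor V E"
    proof (rule contr_ok[OF IH sg deg vy])
      fix z assume "E v z" then show "4 \<le> card (nb E z)" using True sp by blast
    next
      have "nb E v - {y} \<subseteq> (nb E v \<union> nb E y) - {v, y}" using sp(2) by (auto simp: nb_def)
      then have "card (nb E v - {y}) \<le> card ((nb E v \<union> nb E y) - {v, y})"
        by (rule card_mono[rotated]) (use sp(6) in auto)
      moreover have "card (nb E v - {y}) = card (nb E v) - 1" using vy sp(6) by (auto simp: nb_def)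
      ultimately show "3 \<le> card ((nb E v \<union> nb E y) - {v, y})" using True v by force
    qed
    then show False using nK by blast
  next
    case False
    then obtain x where x: "x \<in> V" "card (nb E x) = 3" using deg by force
    then obtain a b c where nx: "nb E x = {a, b, c}" and d3: "a \<noteq> b" "b \<noteq> c" "a \<noteq> c"
      by (auto simp: card_3_iff)
    have Ex: "E x a" "E x b" "E x c" using nx by (auto simp: nb_def)
    have dx: "x \<noteq> a" "x \<noteq> b" "x \<noteq> c" using Ex sp(2) by blast+
    have V: "a \<in> V" "b \<in> V" "c \<in> V" using Ex sp by blast+
    have nbr: "\<exists>w\<in>{a, b, c}. w \<noteq> u \<and> E u w" if u: "u \<in> {a, b, c}" for u
    proof (rule ccontr)
      assume "\<not> (\<exists>w\<in>{a, b, c}. w \<noteq> u \<and> E u w)"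
      then have "nb E x \<inter> nb E u = {}" using nx sp(2) by (auto simp: nb_def)
      moreover have "E x u" using u Ex by blast
      ultimately show False using nc_ok[OF IH sg deg] nK by blast
    qed
    have ab: "E a b \<or> E a c" and ba: "E b a \<or> E b c" and ca: "E c a \<or> E c b"
      using nbr[of a] nbr[of b] nbr[of c] by auto
    consider "E a b" "E a c" "E b c" | "\<not> E b c" | "\<not> E a c" | "\<not> E a b" by blast
    then show False
    proof cases
      case 1 then show False using K4_clique[where E=E, OF x(1) V dx d3(1) d3(3) d3(2) sp(1) Ex] nK by blast
    next
      case 2
      then have "E a b" "E a c" using ba ca sp(1) by blast+
      then show False using H[OF IH sg deg nx _ _ 2] dx d3 nK by blast
    next
      case 3
      then have "E b a" "E b c" using ab ca sp(1) by blast+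
      moreover have "nb E x = {b, a, c}" using nx by auto
      ultimately show False using H[OF IH sg deg _ _ _ 3] dx d3 nK by metis
    next
      case 4
      then have "E c a" "E c b" using ab ba sp(1) by blast+
      moreover have "nb E x = {c, a, b}" using nx by auto
      ultimately show False using H[OF IH sg deg _ _ _ 4] dx d3 nK by metis
    qed
  qed
qed

lemma D_main:
  "simple_graph V E \<Longrightarrow> V \<noteq> {} \<Longrightarrow> \<forall>v\<in>V. 3 \<le> card (nb E v) \<Longrightarrow> has_K4_minor V E"
proof (induction "card V" arbitrary: V E rule: less_induct)
  case less
  have "IHD V" unfolding IHD_def using less.hyps by blast
  then show ?case using D_step less.prems by blast
qed

lemma low_deg:
  assumes "simple_graph V E" "\<not> has_K4_minor V E" "V \<noteq> {}"
  shows "\<exists>v\<in>V. card (nb E v) \<le> 2"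
  using D_main[OF assms(1,3)] assms(2) by force




lemma nb_add_v: "v \<noteq> x \<Longrightarrow> v \<noteq> y \<Longrightarrow> nb (add_edge E x y) v = nb E v"
  by (auto simp: nb_def add_edge_def)

lemma L2:
  assumes sg: "simple_graph V E" and mx: "maximal_K4_minor_free V E" and c3: "3 \<le> card V"
    and vV: "v \<in> V" and dv: "card (nb E v) \<le> 2"
  shows "\<exists>a b. nb E v = {a, b} \<and> a \<noteq> b \<and> E a b"
proof -
  note sp = sg_props[OF sg]
  have nK: "\<not> has_K4_minor V E" using mx by (simp add: maximal_K4_minor_free_def)
  have ad: "\<And>x y. x \<in> V \<Longrightarrow> y \<in> V \<Longrightarrow> x \<noteq> y \<Longrightarrow> \<not> E x y \<Longrightarrow> has_K4_minor V (add_edge E x y)"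
    using mx by (simp add: maximal_K4_minor_free_def)
  have other: "\<exists>w\<in>V. w \<notin> S" if "card S \<le> 2" "finite S" for S
  proof (rule ccontr)
    assume "\<not> (\<exists>w\<in>V. w \<notin> S)" then have "V \<subseteq> S" by blast
    then have "card V \<le> card S" using that(2) by (rule card_mono[rotated])
    then show False using that c3 by simp
  qed
  consider "card (nb E v) = 0" | "card (nb E v) = 1" | "card (nb E v) = 2" using dv by force
  then show ?thesis
  proof cases
    case 1
    then have nbv: "nb E v = {}" using sp(6) by simp
    obtain w where w: "w \<in> V" "w \<notin> {v}" using other[of "{v}"] by auto
    have nvw: "\<not> E v w" using nbv by (auto simp: nb_def)
    let ?H = "add_edge E v w"
    have KH: "has_K4_minor V ?H" using ad[of v w] w vV nvw by auto
    have sgH: "simple_graph V ?H" using sg_add[OF sg vV w(1)] w by auto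
    have nH: "nb ?H v = {w}" using nbv w by (auto simp: nb_def add_edge_def)
    have "has_K4_minor (V - {v}) (delv ?H v)"
    proof (rule K4_del[OF sgH KH vV])
      show "card (nb ?H v) \<le> 2" using nH by simp
      fix p q assume "?H v p" "?H v q" "p \<noteq> q"
      then have "p \<in> nb ?H v" "q \<in> nb ?H v" by (simp_all add: nb_def)
      then show "?H p q" using nH \<open>p \<noteq> q\<close> by auto
    qed
    then have "has_K4_minor V E" by (rule K4_mono) (auto simp: delv_def add_edge_def)
    then show ?thesis using nK by blast
  next
    case 2
    then obtain a where nbv: "nb E v = {a}" by (rule card_1_singletonE)
    have va: "E v a" using nbv by (auto simp: nb_def)
    have av: "a \<noteq> v" using va sp(2) by blast
    have aV: "a \<in> V" using va sp by blast
    show ?thesis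
    proof (cases "\<exists>w. E a w \<and> w \<noteq> v")
      case True
      then obtain w where w: "E a w" "w \<noteq> v" by blast
      have wa: "w \<noteq> a" using w sp(2) by blast
      have wV: "w \<in> V" using w sp by blast
      have nvw: "\<not> E v w" using nbv wa by (auto simp: nb_def)
      let ?H = "add_edge E v w"
      have KH: "has_K4_minor V ?H" using ad[of v w] wV vV nvw w by auto
      have sgH: "simple_graph V ?H" using sg_add[OF sg vV wV] w by auto
      have nH: "nb ?H v = {a, w}" using nbv w by (auto simp: nb_def add_edge_def)
      have "has_K4_minor (V - {v}) (delv ?H v)"
      proof (rule K4_del[OF sgH KH vV])
        show "card (nb ?H v) \<le> 2" using nH by (simp add: card_insert_le_m1)
        fix p q assume "?H v p" "?H v q" "p \<noteq> q"
        then have "p \<in> nb ?H v" "q \<in> nb ?H v" by (simp_all add: nb_def)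
        then have "{p, q} = {a, w}" using nH \<open>p \<noteq> q\<close> by auto
        then show "?H p q" using w sp(1)[OF w(1)] by (auto simp: add_edge_def doubleton_eq_iff)
      qed
      then have "has_K4_minor V E" by (rule K4_mono) (auto simp: delv_def add_edge_def)
      then show ?thesis using nK by blast
    next
      case False
      obtain w where w: "w \<in> V" "w \<notin> {v, a}" using other[of "{v, a}"] by (auto simp: card_insert_le_m1)
      have naw: "\<not> E a w" using False w by auto
      let ?H = "add_edge E a w"
      have KH: "has_K4_minor V ?H" using ad[of a w] w aV naw by auto
      have sgH: "simple_graph V ?H" using sg_add[OF sg aV w(1)] w by auto
      have nH: "nb ?H v = {a}" using nbv w av by (auto simp: nb_def add_edge_def)
      have K1: "has_K4_minor (V - {v}) (delv ?H v)"
      proof (rule K4_del[OF sgH KH vV])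
        show "card (nb ?H v) \<le> 2" using nH by simp
        fix p q assume "?H v p" "?H v q" "p \<noteq> q"
        then have "p \<in> nb ?H v" "q \<in> nb ?H v" by (simp_all add: nb_def)
        then show "?H p q" using nH \<open>p \<noteq> q\<close> by auto
      qed
      have sg1: "simple_graph (V - {v}) (delv ?H v)" by (rule sg_delv[OF sgH])
      have n1: "nb (delv ?H v) a = {w}" using False w av sp(1) by (auto simp: nb_def add_edge_def delv_def)
      have "has_K4_minor (V - {v} - {a}) (delv (delv ?H v) a)"
      proof (rule K4_del[OF sg1 K1])
        show "a \<in> V - {v}" using aV av by simp
        show "card (nb (delv ?H v) a) \<le> 2" using n1 by simp
        fix p q assume "delv ?H v a p" "delv ?H v a q" "p \<noteq> q"
        then have "p \<in> nb (delv ?H v) a" "q \<in> nb (delv ?H v) a" by (simp_all add: nb_def)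
        then show "delv ?H v p q" using n1 \<open>p \<noteq> q\<close> by auto
      qed
      then have "has_K4_minor V E" by (rule K4_mono) (auto simp: delv_def add_edge_def)
      then show ?thesis using nK by blast
    qed
  next
    case 3
    then obtain a b where nbv: "nb E v = {a, b}" and ab: "a \<noteq> b" by (auto simp: card_2_iff)
    show ?thesis
    proof (cases "E a b")
      case True then show ?thesis using nbv ab by blast
    next
      case False
      have va: "E v a" "E v b" using nbv by (auto simp: nb_def)
      have V: "a \<in> V" "b \<in> V" using va sp by blast+
      have dv: "a \<noteq> v" "b \<noteq> v" using va sp(2) by blast+
      let ?H = "add_edge E a b"
      have KH: "has_K4_minor V ?H" using ad[of a b] V ab False by auto
      have sgH: "simple_graph V ?H" using sg_add[OF sg V ab] .
      have nH: "nb ?H v = {a, b}" using nbv dv by (simp add: nb_add_v)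
      have "has_K4_minor (V - {v}) (delv ?H v)"
      proof (rule K4_del[OF sgH KH vV])
        show "card (nb ?H v) \<le> 2" using nH by (simp add: card_insert_le_m1)
        fix p q assume "?H v p" "?H v q" "p \<noteq> q"
        then have "p \<in> nb ?H v" "q \<in> nb ?H v" by (simp_all add: nb_def)
        then have "{p, q} = {a, b}" using nH \<open>p \<noteq> q\<close> by auto
        then show "?H p q" by (auto simp: add_edge_def doubleton_eq_iff)
      qed
      then have "has_K4_minor (V - {v}) (contr E a v)"
        by (rule K4_mono) (use va ab in \<open>auto simp: delv_def add_edge_def contr_def\<close>)
      then have "has_K4_minor V E" using K4_contr[OF sg sp(1)[OF va(1)]] by blast
      then show ?thesis using nK by blast
    qed
  qed
qed

lemma L3:
  assumes sg: "simple_graph V E" and mx: "maximal_K4_minor_free V E"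
    and vV: "v \<in> V" and nbv: "nb E v = {a, b}" and ab: "a \<noteq> b" "E a b"
  shows "maximal_K4_minor_free (V - {v}) (delv E v)"
proof -
  note sp = sg_props[OF sg]
  have nK: "\<not> has_K4_minor V E" using mx by (simp add: maximal_K4_minor_free_def)
  have "has_K4_minor V E" if "has_K4_minor (V - {v}) (delv E v)"
    using that by (rule K4_mono) (auto simp: delv_def)
  then have "\<not> has_K4_minor (V - {v}) (delv E v)" using nK by blast
  moreover have "has_K4_minor (V - {v}) (add_edge (delv E v) x y)"
    if xy: "x \<in> V - {v}" "y \<in> V - {v}" "x \<noteq> y" "\<not> delv E v x y" for x y
  proof -
    have nxy: "\<not> E x y" using xy by (auto simp: delv_def)
    let ?H = "add_edge E x y"
    have ad: "\<forall>x\<in>V. \<forall>y\<in>V. x \<noteq> y \<and> \<not> E x y \<longrightarrow> has_K4_minor V (add_edge E x y)"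
      using mx by (simp add: maximal_K4_minor_free_def)
    have xyV: "x \<in> V" "y \<in> V" "x \<noteq> v" "y \<noteq> v" using xy by auto
    have KH: "has_K4_minor V ?H" using ad xyV xy(3) nxy by blast
    have sgH: "simple_graph V ?H" using sg_add[OF sg xyV(1,2) xy(3)] .
    have nH: "nb ?H v = {a, b}" using nbv nb_add_v[of v x y E] xyV by simp
    have "has_K4_minor (V - {v}) (delv ?H v)"
    proof (rule K4_del[OF sgH KH vV])
      show "card (nb ?H v) \<le> 2" using nH by (simp add: card_insert_le_m1)
      fix p q assume "?H v p" "?H v q" "p \<noteq> q"
      then have "p \<in> nb ?H v" "q \<in> nb ?H v" by (simp_all add: nb_def)
      then have "{p, q} = {a, b}" using nH \<open>p \<noteq> q\<close> by auto
      then show "?H p q" using ab sp(1)[OF ab(2)] by (auto simp: add_edge_def doubleton_eq_iff)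
    qed
    then show ?thesis by (rule K4_mono) (auto simp: delv_def add_edge_def)
  qed
  ultimately show ?thesis unfolding maximal_K4_minor_free_def by blast
qed




lemma struct_main:
  "card V = n \<Longrightarrow> 3 \<le> n \<Longrightarrow> simple_graph V E \<Longrightarrow> maximal_K4_minor_free V E \<Longrightarrow>
   \<exists>col :: 'a \<Rightarrow> nat. (\<forall>v\<in>V. col v < 3) \<and> (\<forall>u w. E u w \<longrightarrow> col u \<noteq> col w)
      \<and> (\<forall>v\<in>V. \<exists>a b. E v a \<and> E v b \<and> E a b)"
proof (induction n arbitrary: V E)
  case 0 then show ?case by simp
next
  case (Suc n)
  note sg = Suc.prems(3) and mx = Suc.prems(4)
  note sp = sg_props[OF sg]
  have nK: "\<not> has_K4_minor V E" using mx by (simp add: maximal_K4_minor_free_def)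
  show ?case
  proof (cases "n = 2")
    case True
    then have "card V = 3" using Suc.prems by simp
    then obtain p q r where V: "V = {p, q, r}" and d: "p \<noteq> q" "q \<noteq> r" "p \<noteq> r"
      by (auto simp: card_3_iff)
    have all: "E x y" if "x \<in> V" "y \<in> V" "x \<noteq> y" for x y
    proof (rule ccontr)
      assume "\<not> E x y"
      then have "has_K4_minor V (add_edge E x y)" using mx that by (simp add: maximal_K4_minor_free_def)
      then have "4 \<le> card V" using K4_card sp(5) by blast
      then show False using \<open>card V = 3\<close> by simp
    qed
    define col where "col z = (if z = p then 0 else if z = q then 1 else (2::nat))" for z
    have "\<forall>v\<in>V. col v < 3" by (simp add: col_def)
    moreover have "\<forall>u w. E u w \<longrightarrow> col u \<noteq> col w"
    proof (intro allI impI)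
      fix u w assume e: "E u w"
      then have "u \<in> V" "w \<in> V" "u \<noteq> w" using sp by blast+
      then show "col u \<noteq> col w" using V d by (auto simp: col_def)
    qed
    moreover have "\<forall>v\<in>V. \<exists>a b. E v a \<and> E v b \<and> E a b"
    proof
      fix v assume "v \<in> V"
      then have "v = p \<or> v = q \<or> v = r" using V by blast
      then show "\<exists>a b. E v a \<and> E v b \<and> E a b" using all V d by (metis insertCI)
    qed
    ultimately show ?thesis by blast
  next
    case False
    then have n3: "3 \<le> n" using Suc.prems(2) by simp
    have "V \<noteq> {}" using Suc.prems(1) by auto
    then obtain v where vV: "v \<in> V" and dv: "card (nb E v) \<le> 2" using low_deg[OF sg nK] by blast
    obtain a b where nbv: "nb E v = {a, b}" and ab: "a \<noteq> b" "E a b"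
      using L2[OF sg mx _ vV dv] Suc.prems(1,2) by auto
    have mx': "maximal_K4_minor_free (V - {v}) (delv E v)" by (rule L3[OF sg mx vV nbv ab])
    have sg': "simple_graph (V - {v}) (delv E v)" by (rule sg_delv[OF sg])
    have "card (V - {v}) = n" using Suc.prems(1) vV by simp
    then obtain col :: "'a \<Rightarrow> nat" where c1: "\<forall>x\<in>V - {v}. col x < 3" and c2: "\<forall>u w. delv E v u w \<longrightarrow> col u \<noteq> col w"
      and c3: "\<forall>x\<in>V - {v}. \<exists>a b. delv E v x a \<and> delv E v x b \<and> delv E v a b"
      using Suc.IH[OF _ n3 sg' mx'] by blast
    have va: "E v a" "E v b" using nbv by (auto simp: nb_def)
    have dva: "a \<noteq> v" "b \<noteq> v" using va sp(2) by blast+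
    have abV: "a \<in> V - {v}" "b \<in> V - {v}" using va sp dva by blast+
    have cab: "col a \<noteq> col b" using c2 ab dva by (auto simp: delv_def)
    have ca3: "col a < 3" "col b < 3" using c1 abV by blast+
    define k where "k = (if col a \<noteq> 0 \<and> col b \<noteq> 0 then 0 else if col a \<noteq> 1 \<and> col b \<noteq> 1 then 1 else (2::nat))"
    have k: "k < 3" "k \<noteq> col a" "k \<noteq> col b" using cab ca3 unfolding k_def by auto
    define col' where "col' = col(v := k)"
    have "\<forall>x\<in>V. col' x < 3" using c1 k by (auto simp: col'_def)
    moreover have "\<forall>u w. E u w \<longrightarrow> col' u \<noteq> col' w"
    proof (intro allI impI)
      fix u w assume e: "E u w"
      have nbw: "E v x \<Longrightarrow> x = a \<or> x = b" for x using nbv by (auto simp: nb_def)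
      show "col' u \<noteq> col' w"
      proof (cases "u = v")
        case True
        then have "w = a \<or> w = b" using nbw e by blast
        then show ?thesis using True k dva by (auto simp: col'_def)
      next
        case uv: False
        show ?thesis
        proof (cases "w = v")
          case True
          then have "u = a \<or> u = b" using nbw sp(1)[OF e] by blast
          then show ?thesis using True k dva by (auto simp: col'_def)
        next
          case False
          then show ?thesis using c2 e uv by (auto simp: col'_def delv_def)
        qed
      qed
    qed
    moreover have "\<forall>x\<in>V. \<exists>a b. E x a \<and> E x b \<and> E a b"
    proof
      fix x assume "x \<in> V"
      show "\<exists>a b. E x a \<and> E x b \<and> E a b"
      proof (cases "x = v")
        case True then show ?thesis using va ab by blast
      next
        case False
        then have "x \<in> V - {v}" using \<open>x \<in> V\<close> by simp
        then obtain a' b' where "delv E v x a'" "delv E v x b'" "delv E v a' b'" using c3 by blast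
        then show ?thesis unfolding delv_def by blast
      qed
    qed
    ultimately show ?thesis by blast
  qed
qed




lemma two_in:
  assumes "finite S" "p \<in> S \<inter> N" "q \<in> S \<inter> N" "p \<noteq> q"
  shows "2 \<le> card (S \<inter> N)"
proof -
  have "{p, q} \<subseteq> S \<inter> N" using assms by blast
  then have "card {p, q} \<le> card (S \<inter> N)" using assms(1) by (intro card_mono) auto
  then show ?thesis using assms(4) by simp
qed

theorem theorem3p2:
  fixes V :: "'a set" and E :: "'a \<Rightarrow> 'a \<Rightarrow> bool"
  assumes "simple_graph V E"
    and "maximal_K4_minor_free V E"
    and "card V \<ge> 3"
  shows "double_domination_number V E \<le> (2 * card V) div 3"
proof -
  note sg = assms(1)
  note sp = sg_props[OF sg]
  obtain col :: "'a \<Rightarrow> nat" where c1: "\<forall>v\<in>V. col v < 3" and c2: "\<forall>u w. E u w \<longrightarrow> col u \<noteq> col w"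
      and c3: "\<forall>v\<in>V. \<exists>a b. E v a \<and> E v b \<and> E a b"
    using struct_main[OF refl assms(3) sg assms(2)] by blast
  define C where "C j = {v\<in>V. col v = j}" for j
  define cnt where "cnt j = card (C j)" for j
  define k where "k = (if cnt 0 \<ge> cnt 1 \<and> cnt 0 \<ge> cnt 2 then 0 else if cnt 1 \<ge> cnt 2 then 1 else (2::nat))"
  have fC: "finite (C j)" for j using sp(5) by (simp add: C_def)
  have VC: "V = C 0 \<union> C 1 \<union> C 2" using c1 by (auto simp: C_def)
  have "card (C 0 \<union> C 1 \<union> C 2) = cnt 0 + cnt 1 + cnt 2"
  proof -
    have "card (C 0 \<union> C 1 \<union> C 2) = card (C 0 \<union> C 1) + card (C 2)"
      using fC by (intro card_Un_disjoint) (auto simp: C_def)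
    moreover have "card (C 0 \<union> C 1) = card (C 0) + card (C 1)"
      using fC by (intro card_Un_disjoint) (auto simp: C_def)
    ultimately show ?thesis by (simp add: cnt_def)
  qed
  then have sum: "cnt 0 + cnt 1 + cnt 2 = card V" using VC by simp
  have big: "card V \<le> 3 * cnt k" using sum unfolding k_def by auto
  define S where "S = {v\<in>V. col v \<noteq> k}"
  have SV: "S = V - C k" by (auto simp: S_def C_def)
  have cardS: "card S = card V - cnt k"
    unfolding SV cnt_def by (rule card_Diff_subset) (use fC in \<open>auto simp: C_def\<close>)
  have fS: "finite S" using sp(5) by (simp add: S_def)
  have dd: "double_dominating V E S"
    unfolding double_dominating_def
  proof (intro conjI ballI)
    show "S \<subseteq> V" by (auto simp: S_def)
    fix v assume vV: "v \<in> V"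
    obtain a b where e: "E v a" "E v b" "E a b" using c3 vV by blast
    have V: "a \<in> V" "b \<in> V" using e sp by blast+
    have d: "v \<noteq> a" "v \<noteq> b" "a \<noteq> b" using e sp(2) by blast+
    have cd: "col v \<noteq> col a" "col v \<noteq> col b" "col a \<noteq> col b" using c2 e by blast+
    have N: "v \<in> closed_nbhd E v" "a \<in> closed_nbhd E v" "b \<in> closed_nbhd E v"
      using e by (auto simp: closed_nbhd_def)
    show "2 \<le> card (S \<inter> closed_nbhd E v)"
    proof (cases "col v = k")
      case True
      then show ?thesis using two_in[OF fS, of a "closed_nbhd E v" b] V N d cd by (auto simp: S_def)
    next
      case cv: False
      show ?thesis
      proof (cases "col a = k")
        case True
        then show ?thesis using two_in[OF fS, of v "closed_nbhd E v" b] vV V N d cd cv by (auto simp: S_def)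
      next
        case False
        then show ?thesis using two_in[OF fS, of v "closed_nbhd E v" a] vV V N d cd cv by (auto simp: S_def)
      qed
    qed
  qed
  have fin: "finite {card S |S. double_dominating V E S}"
  proof (rule finite_subset)
    show "{card S |S. double_dominating V E S} \<subseteq> {..card V}"
      using sp(5) by (auto simp: double_dominating_def card_mono)
  qed simp
  have "double_domination_number V E \<le> card S"
    unfolding double_domination_number_def using dd fin by (intro Min_le) auto
  moreover have "card S \<le> (2 * card V) div 3" using cardS big by presburger
  ultimately show ?thesis by simp
qed


end
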